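(* Let $M$ be a parabolic-retract-compatible Coxeter matrix over a finite set $S$ and $A_S$ its associated Artin group. Then for every $x\in S$ there exists an ordinary retraction $\varphi_x:A_S\to A_{S\setminus\{x\}}$.
   Context: A Coxeter matrix over a finite set $S$ is a matrix $M=(m_{s,t})_{s,t\in S}$ with entries in $\mathbb{N}\cup\{\infty\}$, $m_{s,s}=1$, and $m_{s,t}=m_{t,s}\ge 2$ for $s\neq t$. Write $\Pi(s,t,m)$ for the alternating word $sts\cdots$ of length $m$. The Artin group is $A_S=\langle S\mid \Pi(s,t,m_{s,t})=\Pi(t,s,m_{s,t})$ for $s\neq t$, $m_{s,t}\neq\infty\rangle$. For $X\subseteq S$, $A_X$ is the subgroup generated by $X$ ($A_\emptyset$ trivial) and $M_X$ the submatrix indexed by $X$. $M$ is retract-compatible if all its entries are finite odd numbers and for every triple $a,b,c\in S$ of pairwise distinct elements, up to permuting $a,b,c$, $m_{a,b}=m_{a,c}$ and $m_{b,c}$ divides $m_{a,b}$; a rank-$1$ Coxeter matrix is always retract-compatible. $M$ is parabolic-retract-compatible if there is a partition $S=T_1\sqcup\cdots\sqcup T_k$ such that (1) each $M_{T_i}$ is retract-compatible, and (2) for each $i\neq j$ there exists $n_{ij}$, either an even number or $\infty$, with $m_{a,b}=n_{ij}$ for all $(a,b)\in T_i\times T_j$. A retraction $\varphi:A_S\to A_X$ (homomorphism restricting to the identity on $A_X$) is ordinary if $\varphi(x)=x$ for all $x\in X$ and $\varphi(y)\in X\cup\{1\}$ for all $y\in S\setminus X$. *)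

theory Defs
  imports "HOL-Algebra.Generated_Groups" "HOL-Library.Extended_Nat"
begin

definition coxeter_matrix :: "'a set \<Rightarrow> ('a \<Rightarrow> 'a \<Rightarrow> enat) \<Rightarrow> bool" where
  "coxeter_matrix S M \<longleftrightarrow> finite S \<and> (\<forall>s\<in>S. M s s = 1) \<and>
     (\<forall>s\<in>S. \<forall>t\<in>S. s \<noteq> t \<longrightarrow> M s t = M t s \<and> M s t \<ge> 2)"

definition retract_compatible :: "'a set \<Rightarrow> ('a \<Rightarrow> 'a \<Rightarrow> enat) \<Rightarrow> bool" where
  "retract_compatible X M \<longleftrightarrow>
     (\<forall>a\<in>X. \<forall>b\<in>X. \<exists>n. M a b = enat n \<and> odd n) \<and>
     (\<forall>a\<in>X. \<forall>b\<in>X. \<forall>c\<in>X. a \<noteq> b \<and> a \<noteq> c \<and> b \<noteq> c \<longrightarrow>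
        (let P = (\<lambda>a b c. M a b = M a c \<and>
                     (\<exists>n k. M a b = enat n \<and> M b c = enat k \<and> k dvd n))
         in P a b c \<or> P b a c \<or> P c a b))"

definition parabolic_retract_compatible :: "'a set \<Rightarrow> ('a \<Rightarrow> 'a \<Rightarrow> enat) \<Rightarrow> bool" where
  "parabolic_retract_compatible S M \<longleftrightarrow>
     (\<exists>P. (\<Union>P = S) \<and> (\<forall>T\<in>P. T \<noteq> {}) \<and>
          (\<forall>T\<in>P. \<forall>T'\<in>P. T \<noteq> T' \<longrightarrow> T \<inter> T' = {}) \<and>
          (\<forall>T\<in>P. retract_compatible T M) \<and>
          (\<forall>T\<in>P. \<forall>T'\<in>P. T \<noteq> T' \<longrightarrow>
             (\<exists>n. (n = \<infinity> \<or> (\<exists>k. n = enat k \<and> even k)) \<and>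
                  (\<forall>a\<in>T. \<forall>b\<in>T'. M a b = n))))"

(* Words: letters (s, False) = s, (s, True) = s^{-1} *)
definition alt_word :: "'a \<Rightarrow> 'a \<Rightarrow> nat \<Rightarrow> ('a \<times> bool) list" where
  "alt_word s t m = map (\<lambda>i. (if even i then s else t, False)) [0..<m]"

inductive artin_rel :: "('a \<Rightarrow> 'a \<Rightarrow> enat) \<Rightarrow> 'a set \<Rightarrow> ('a \<times> bool) list \<Rightarrow> ('a \<times> bool) list \<Rightarrow> bool"
  for M S where
  refl: "w \<in> lists (S \<times> UNIV) \<Longrightarrow> artin_rel M S w w"
| sym: "artin_rel M S u v \<Longrightarrow> artin_rel M S v u"
| trans: "artin_rel M S u v \<Longrightarrow> artin_rel M S v w \<Longrightarrow> artin_rel M S u w"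
| cancel: "u \<in> lists (S \<times> UNIV) \<Longrightarrow> v \<in> lists (S \<times> UNIV) \<Longrightarrow> s \<in> S \<Longrightarrow>
     artin_rel M S (u @ [(s, b), (s, \<not> b)] @ v) (u @ v)"
| braid: "u \<in> lists (S \<times> UNIV) \<Longrightarrow> v \<in> lists (S \<times> UNIV) \<Longrightarrow> s \<in> S \<Longrightarrow> t \<in> S \<Longrightarrow>
     s \<noteq> t \<Longrightarrow> M s t = enat m \<Longrightarrow>
     artin_rel M S (u @ alt_word s t m @ v) (u @ alt_word t s m @ v)"

definition artin_group :: "('a \<Rightarrow> 'a \<Rightarrow> enat) \<Rightarrow> 'a set \<Rightarrow> ('a \<times> bool) list set monoid" where
  "artin_group M S =
     \<lparr> carrier = {{w. artin_rel M S u w} | u. u \<in> lists (S \<times> UNIV)},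
       mult = (\<lambda>A B. {w. \<exists>u\<in>A. \<exists>v\<in>B. artin_rel M S (u @ v) w}),
       one = {w. artin_rel M S [] w} \<rparr>"

definition artin_gen :: "('a \<Rightarrow> 'a \<Rightarrow> enat) \<Rightarrow> 'a set \<Rightarrow> 'a \<Rightarrow> ('a \<times> bool) list set" where
  "artin_gen M S s = {w. artin_rel M S [(s, False)] w}"

definition artin_parabolic :: "('a \<Rightarrow> 'a \<Rightarrow> enat) \<Rightarrow> 'a set \<Rightarrow> 'a set \<Rightarrow> ('a \<times> bool) list set set" where
  "artin_parabolic M S X = generate (artin_group M S) (artin_gen M S ` X)"

definition ordinary_retraction ::
  "('a \<Rightarrow> 'a \<Rightarrow> enat) \<Rightarrow> 'a set \<Rightarrow> 'a set \<Rightarrow> (('a \<times> bool) list set \<Rightarrow> ('a \<times> bool) list set) \<Rightarrow> bool" where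
  "ordinary_retraction M S X \<phi> \<longleftrightarrow>
     \<phi> \<in> hom (artin_group M S) ((artin_group M S)\<lparr>carrier := artin_parabolic M S X\<rparr>) \<and>
     (\<forall>g\<in>artin_parabolic M S X. \<phi> g = g) \<and>
     (\<forall>x\<in>X. \<phi> (artin_gen M S x) = artin_gen M S x) \<and>
     (\<forall>y\<in>S - X. \<phi> (artin_gen M S y) \<in> artin_gen M S ` X \<union> {\<one>\<^bsub>artin_group M S\<^esub>})"

end

theory Submission
  imports Defs
begin


abbreviation "L S \<equiv> lists (S \<times> (UNIV::bool set))"

definition cls :: "('a \<Rightarrow> 'a \<Rightarrow> enat) \<Rightarrow> 'a set \<Rightarrow> ('a \<times> bool) list \<Rightarrow> ('a \<times> bool) list set" where
  "cls M S u = {w. artin_rel M S u w}"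

lemma alt_word_lists: "s \<in> S \<Longrightarrow> t \<in> S \<Longrightarrow> alt_word s t m \<in> L S"
  by (auto simp: alt_word_def)

lemma alt_word_Suc: "alt_word s t (Suc m) = alt_word s t m @ [(if even m then s else t, False)]"
  by (simp add: alt_word_def)

lemma alt_word_0[simp]: "alt_word s t 0 = []"
  by (simp add: alt_word_def)

lemma alt_word_add:
  "alt_word s t (a + b) = alt_word s t a @ (if even a then alt_word s t b else alt_word t s b)"
  by (induction b) (auto simp: alt_word_Suc)

lemma rel_lists: "artin_rel M S u v \<Longrightarrow> u \<in> L S \<and> v \<in> L S"
  by (induction rule: artin_rel.induct) (auto simp: alt_word_lists)

lemma rel_refl: "w \<in> L S \<Longrightarrow> artin_rel M S w w"
  by (rule artin_rel.refl)

lemma rel_app_left: "artin_rel M S u v \<Longrightarrow> w \<in> L S \<Longrightarrow> artin_rel M S (w @ u) (w @ v)"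
proof (induction rule: artin_rel.induct)
  case (refl w')
  then show ?case by (intro artin_rel.refl) auto
next
  case (sym u v)
  then show ?case by (blast intro: artin_rel.sym)
next
  case (trans u v w')
  then show ?case by (blast intro: artin_rel.trans)
next
  case (cancel u v s b)
  then show ?case using artin_rel.cancel[of "w @ u" S v s M b] by simp
next
  case (braid u v s t m)
  then show ?case using artin_rel.braid[of "w @ u" S v s t M m] by simp
qed

lemma rel_app_right: "artin_rel M S u v \<Longrightarrow> w \<in> L S \<Longrightarrow> artin_rel M S (u @ w) (v @ w)"
proof (induction rule: artin_rel.induct)
  case (refl w')
  then show ?case by (intro artin_rel.refl) auto
next
  case (sym u v)
  then show ?case by (blast intro: artin_rel.sym)
next
  case (trans u v w')
  then show ?case by (blast intro: artin_rel.trans)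
next
  case (cancel u v s b)
  then show ?case using artin_rel.cancel[of u S "v @ w" s M b] by simp
next
  case (braid u v s t m)
  then show ?case using artin_rel.braid[of u S "v @ w" s t M m] by simp
qed

lemma rel_app: "artin_rel M S a a' \<Longrightarrow> artin_rel M S b b' \<Longrightarrow> artin_rel M S (a @ b) (a' @ b')"
  by (meson artin_rel.trans rel_app_left rel_app_right rel_lists)

lemma cls_eq: "artin_rel M S u v \<Longrightarrow> cls M S u = cls M S v"
  unfolding cls_def by (blast intro: artin_rel.trans artin_rel.sym)

lemma cls_eq_iff: "u \<in> L S \<Longrightarrow> cls M S u = cls M S v \<longleftrightarrow> artin_rel M S u v"
  unfolding cls_def by (metis artin_rel.refl artin_rel.sym cls_def cls_eq mem_Collect_eq)

lemma carrier_eq: "carrier (artin_group M S) = cls M S ` L S"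
  unfolding artin_group_def cls_def by auto

lemma one_eq: "\<one>\<^bsub>artin_group M S\<^esub> = cls M S []"
  unfolding artin_group_def cls_def by auto

lemma mult_eq: "u \<in> L S \<Longrightarrow> v \<in> L S \<Longrightarrow>
   cls M S u \<otimes>\<^bsub>artin_group M S\<^esub> cls M S v = cls M S (u @ v)"
  unfolding artin_group_def cls_def
  by (auto intro: artin_rel.refl artin_rel.trans rel_app)

definition inv_word :: "('a \<times> bool) list \<Rightarrow> ('a \<times> bool) list" where
  "inv_word u = rev (map (\<lambda>(s, b). (s, \<not> b)) u)"

lemma inv_word_lists: "u \<in> L S \<Longrightarrow> inv_word u \<in> L S"
  by (auto simp: inv_word_def)

lemma inv_word_rel: "u \<in> L S \<Longrightarrow> artin_rel M S (inv_word u @ u) []"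
proof (induction u)
  case Nil
  then show ?case by (simp add: inv_word_def artin_rel.refl)
next
  case (Cons a u)
  obtain s b where a: "a = (s, b)" by force
  have s: "s \<in> S" and u: "u \<in> L S" using Cons.prems a by auto
  have "artin_rel M S (inv_word u @ [(s, \<not> b), (s, \<not> \<not> b)] @ u) (inv_word u @ u)"
    by (rule artin_rel.cancel) (auto simp: s u inv_word_lists)
  moreover have "inv_word (a # u) @ a # u = inv_word u @ [(s, \<not> b), (s, \<not> \<not> b)] @ u"
    by (simp add: inv_word_def a)
  ultimately show ?case using Cons.IH u by (metis artin_rel.trans)
qed

lemma artin_group_is_group: "group (artin_group M S)"
proof (rule groupI)
  fix x y assume "x \<in> carrier (artin_group M S)" "y \<in> carrier (artin_group M S)"
  then obtain u v where "u \<in> L S" "v \<in> L S" "x = cls M S u" "y = cls M S v"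
    by (auto simp: carrier_eq)
  then show "x \<otimes>\<^bsub>artin_group M S\<^esub> y \<in> carrier (artin_group M S)"
    by (simp add: carrier_eq mult_eq del: in_listsD)
next
  show "\<one>\<^bsub>artin_group M S\<^esub> \<in> carrier (artin_group M S)"
    by (auto simp: carrier_eq one_eq)
next
  fix x y z assume "x \<in> carrier (artin_group M S)" "y \<in> carrier (artin_group M S)"
    "z \<in> carrier (artin_group M S)"
  then obtain u v w where "u \<in> L S" "v \<in> L S" "w \<in> L S" "x = cls M S u" "y = cls M S v" "z = cls M S w"
    by (auto simp: carrier_eq)
  then show "x \<otimes>\<^bsub>artin_group M S\<^esub> y \<otimes>\<^bsub>artin_group M S\<^esub> z =
      x \<otimes>\<^bsub>artin_group M S\<^esub> (y \<otimes>\<^bsub>artin_group M S\<^esub> z)"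
    by (simp add: mult_eq del: in_listsD)
next
  fix x assume "x \<in> carrier (artin_group M S)"
  then obtain u where "u \<in> L S" "x = cls M S u" by (auto simp: carrier_eq)
  then show "\<one>\<^bsub>artin_group M S\<^esub> \<otimes>\<^bsub>artin_group M S\<^esub> x = x"
    using mult_eq[of "[]" S u M] by (simp add: one_eq)
next
  fix x assume "x \<in> carrier (artin_group M S)"
  then obtain u where u: "u \<in> L S" "x = cls M S u" by (auto simp: carrier_eq)
  show "\<exists>y\<in>carrier (artin_group M S). y \<otimes>\<^bsub>artin_group M S\<^esub> x = \<one>\<^bsub>artin_group M S\<^esub>"
    apply (rule bexI[of _ "cls M S (inv_word u)"])
    using u inv_word_rel[OF u(1), of M] inv_word_lists[OF u(1)]
    by (simp_all add: carrier_eq mult_eq one_eq cls_eq image_iff del: in_listsD) blast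
qed




lemma gen_eq: "artin_gen M S s = cls M S [(s, False)]"
  by (simp add: artin_gen_def cls_def)

lemma inv_gen: "s \<in> S \<Longrightarrow> inv\<^bsub>artin_group M S\<^esub> (cls M S [(s, False)]) = cls M S [(s, True)]"
proof -
  assume s: "s \<in> S"
  interpret G: group "artin_group M S" by (rule artin_group_is_group)
  have "artin_rel M S ([] @ [(s, True), (s, \<not> True)] @ []) ([] @ [])"
    by (rule artin_rel.cancel) (auto simp: s)
  then have "cls M S [(s, True)] \<otimes>\<^bsub>artin_group M S\<^esub> cls M S [(s, False)] = \<one>\<^bsub>artin_group M S\<^esub>"
    using s by (simp add: mult_eq one_eq cls_eq)
  then show ?thesis
  proof (intro G.inv_equality)
    have "[(s, False)] \<in> L S" "[(s, True)] \<in> L S" using s by auto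
    then show "cls M S [(s, False)] \<in> carrier (artin_group M S)"
      "cls M S [(s, True)] \<in> carrier (artin_group M S)" unfolding carrier_eq by blast+
  qed
qed

lemma parabolic_eq:
  assumes "X \<subseteq> S"
  shows "artin_parabolic M S X = cls M S ` L X"
proof
  show "artin_parabolic M S X \<subseteq> cls M S ` L X"
  proof
    fix g assume "g \<in> artin_parabolic M S X"
    then show "g \<in> cls M S ` L X"
      unfolding artin_parabolic_def
    proof (induction rule: generate.induct)
      case one
      have "[] \<in> L X" by simp
      then show ?case unfolding one_eq by blast
    next
      case (incl h)
      then obtain s where s: "s \<in> X" "h = cls M S [(s, False)]" by (auto simp: gen_eq)
      then have "[(s, False)] \<in> L X" by simp
      then show ?case using s by blast
    next
      case (inv h)
      then obtain s where s: "s \<in> X" "h = cls M S [(s, False)]" by (auto simp: gen_eq)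
      have "s \<in> S" using s(1) assms by blast
      then have "inv\<^bsub>artin_group M S\<^esub> h = cls M S [(s, True)]" using inv_gen[of s S M] s(2) by simp
      moreover have "[(s, True)] \<in> L X" using s by simp
      ultimately show ?case by blast
    next
      case (eng h1 h2)
      then obtain u v where uv: "u \<in> L X" "v \<in> L X" "h1 = cls M S u" "h2 = cls M S v" by auto
      have XS: "L X \<subseteq> L S" using assms by (intro lists_mono) blast
      have "h1 \<otimes>\<^bsub>artin_group M S\<^esub> h2 = cls M S (u @ v)" 
        using mult_eq[of u S v M] uv XS by blast
      moreover have "u @ v \<in> L X" using uv by simp
      ultimately show ?case by blast
    qed
  qed
next
  have XS: "L X \<subseteq> L S" using assms by (intro lists_mono) blast
  have "u \<in> L X \<Longrightarrow> cls M S u \<in> artin_parabolic M S X" for u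
  proof (induction u)
    case Nil
    then show ?case using generate.one[of "artin_group M S"] by (simp add: artin_parabolic_def one_eq)
  next
    case (Cons a u)
    obtain s b where a: "a = (s, b)" by force
    have sX: "s \<in> X" "u \<in> L X" using Cons.prems a by auto
    have sS: "s \<in> S" "u \<in> L S" using sX assms XS by auto
    have g: "cls M S [(s, False)] \<in> artin_gen M S ` X" using sX by (simp add: gen_eq)
    have "cls M S [a] \<in> artin_parabolic M S X"
    proof (cases b)
      case True
      then show ?thesis using generate.inv[OF g, of "artin_group M S"] inv_gen[of s S M] sS
        by (simp add: artin_parabolic_def a)
    next
      case False
      then show ?thesis using generate.incl[OF g, of "artin_group M S"]
        by (simp add: artin_parabolic_def a)
    qed
    then have "cls M S [a] \<otimes>\<^bsub>artin_group M S\<^esub> cls M S u \<in> artin_parabolic M S X"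
      using Cons.IH[OF sX(2)] unfolding artin_parabolic_def by (rule generate.eng)
    moreover have "cls M S [a] \<otimes>\<^bsub>artin_group M S\<^esub> cls M S u = cls M S (a # u)"
      using mult_eq[of "[a]" S u M] sS a by simp
    ultimately show ?case by simp
  qed
  then show "cls M S ` L X \<subseteq> artin_parabolic M S X" by blast
qed



definition sub :: "'a \<Rightarrow> (bool \<Rightarrow> ('a \<times> bool) list) \<Rightarrow> ('a \<times> bool) list \<Rightarrow> ('a \<times> bool) list" where
  "sub x r u = concat (map (\<lambda>(s, b). if s = x then r b else [(s, b)]) u)"

lemma sub_Nil[simp]: "sub x r [] = []" by (simp add: sub_def)
lemma sub_Cons[simp]: "sub x r ((s, b) # u) = (if s = x then r b else [(s, b)]) @ sub x r u"
  by (simp add: sub_def)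
lemma sub_append[simp]: "sub x r (u @ v) = sub x r u @ sub x r v" by (simp add: sub_def)

lemma sub_lists: "u \<in> L S \<Longrightarrow> (\<And>b. r b \<in> L S) \<Longrightarrow> sub x r u \<in> L S"
proof (induction u)
  case Nil
  then show ?case by simp
next
  case (Cons a u)
  obtain s b where a: "a = (s, b)" by force
  have "sub x r u \<in> L S" using Cons by simp
  moreover have "(if s = x then r b else [(s, b)]) \<in> L S" using Cons.prems a by auto
  ultimately show ?case unfolding a sub_Cons by simp
qed

lemma sub_id: "\<forall>a\<in>set u. fst a \<noteq> x \<Longrightarrow> sub x r u = u"
  by (induction u) auto

lemma sub_alt_id: "s \<noteq> x \<Longrightarrow> t \<noteq> x \<Longrightarrow> sub x r (alt_word s t m) = alt_word s t m"
  by (rule sub_id) (simp add: alt_word_def)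

lemma sub_alt_1: "t \<noteq> x \<Longrightarrow> sub x (\<lambda>b. [(y, b)]) (alt_word x t m) = alt_word y t m"
  by (induction m) (auto simp: alt_word_Suc)

lemma sub_alt_2: "t \<noteq> x \<Longrightarrow> sub x (\<lambda>b. [(y, b)]) (alt_word t x m) = alt_word t y m"
  by (induction m) (auto simp: alt_word_Suc)

lemma sub_alt_even: "t \<noteq> x \<Longrightarrow> sub x (\<lambda>b. []) (alt_word x t (2 * j)) = sub x (\<lambda>b. []) (alt_word t x (2 * j))"
proof (induction j)
  case 0
  then show ?case by simp
next
  case (Suc j)
  have e: "2 * Suc j = 2 * j + 2" by simp
  have a: "alt_word s t' 2 = [(s, False), (t', False)]" for s t' :: 'a
    by (simp add: numeral_2_eq_2 alt_word_Suc)
  show ?case using Suc unfolding e alt_word_add by (simp add: a)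
qed

lemma cox_sym: "coxeter_matrix S M \<Longrightarrow> s \<in> S \<Longrightarrow> t \<in> S \<Longrightarrow> M s t = M t s"
  unfolding coxeter_matrix_def by (cases "s = t") auto

lemma braid0: "s \<in> S \<Longrightarrow> t \<in> S \<Longrightarrow> s \<noteq> t \<Longrightarrow> M s t = enat m \<Longrightarrow>
   artin_rel M S (alt_word s t m) (alt_word t s m)"
  using artin_rel.braid[of "[]" S "[]" s t M m] by simp

lemma alt_dvd:
  assumes "y \<in> S" "t \<in> S" "y \<noteq> t" "M y t = enat k" "coxeter_matrix S M"
  shows "artin_rel M S (alt_word y t (k * j)) (alt_word t y (k * j))"
proof (induction j)
  case 0
  then show ?case by (simp add: artin_rel.refl)
next
  case (Suc j)
  have e: "k * Suc j = k * j + k" by simp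
  have b1: "artin_rel M S (alt_word y t k) (alt_word t y k)" using braid0[of y S t M k] assms by blast
  have "M t y = enat k" using assms cox_sym[of S M t y] by simp
  then have b2: "artin_rel M S (alt_word t y k) (alt_word y t k)" using braid0[of t S y M k] assms by blast
  show ?case
  proof (cases "even (k * j)")
    case True
    then show ?thesis unfolding e alt_word_add using rel_app[OF Suc b1] by simp
  next
    case False
    then show ?thesis unfolding e alt_word_add using rel_app[OF Suc b2] by simp
  qed
qed

lemma sub_rel:
  assumes cox: "coxeter_matrix S M"
    and rL: "\<And>b. r b \<in> L S"
    and rc: "\<And>b. artin_rel M S (r b @ r (\<not> b)) []"
    and rb: "\<And>t m. t \<in> S \<Longrightarrow> t \<noteq> x \<Longrightarrow> M x t = enat m \<Longrightarrow>
               artin_rel M S (sub x r (alt_word x t m)) (sub x r (alt_word t x m))"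
    and R: "artin_rel M S u v"
  shows "artin_rel M S (sub x r u) (sub x r v)"
  using R
proof (induction rule: artin_rel.induct)
  case (refl w)
  show ?case by (rule artin_rel.refl, rule sub_lists[OF refl rL])
next
  case (sym u v)
  show ?case by (rule artin_rel.sym[OF sym.IH])
next
  case (trans u v w)
  show ?case by (rule artin_rel.trans[OF trans.IH])
next
  case (cancel u v s b)
  have su: "sub x r u \<in> L S" "sub x r v \<in> L S" using sub_lists[OF cancel(1) rL] sub_lists[OF cancel(2) rL] by auto
  show ?case
  proof (cases "s = x")
    case True
    have "artin_rel M S (sub x r u @ (r b @ r (\<not> b)) @ sub x r v) (sub x r u @ [] @ sub x r v)"
      by (rule rel_app[OF rel_refl[OF su(1)] rel_app[OF rc rel_refl[OF su(2)]]])
    then show ?thesis using True by simp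
  next
    case False
    then show ?thesis using artin_rel.cancel[OF su cancel(3), of M b] by simp
  qed
next
  case (braid u v s t m)
  have su: "sub x r u \<in> L S" "sub x r v \<in> L S" using sub_lists[OF braid(1) rL] sub_lists[OF braid(2) rL] by auto
  have mid: "artin_rel M S (sub x r (alt_word s t m)) (sub x r (alt_word t s m))"
  proof -
    consider "s = x" | "t = x" | "s \<noteq> x" "t \<noteq> x" by blast
    then show ?thesis
    proof cases
      case 1
      then show ?thesis using rb[of t m] braid by simp
    next
      case 2
      have "M x s = enat m" using braid 2 cox_sym[OF cox, of s t] by simp
      then have "artin_rel M S (sub x r (alt_word x s m)) (sub x r (alt_word s x m))"
        using rb[of s m] braid 2 by simp
      then show ?thesis using 2 by (simp add: artin_rel.sym)
    next
      case 3
      then show ?thesis using braid0[of s S t M m] braid by (simp add: sub_alt_id)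
    qed
  qed
  show ?case using rel_app[OF rel_refl[OF su(1)] rel_app[OF mid rel_refl[OF su(2)]]] by simp
qed




lemma sub_lists2: "u \<in> L S \<Longrightarrow> (\<And>b. r b \<in> L (S - {x})) \<Longrightarrow> sub x r u \<in> L (S - {x})"
proof (induction u)
  case Nil
  then show ?case by simp
next
  case (Cons a u)
  obtain s b where a: "a = (s, b)" by force
  have "sub x r u \<in> L (S - {x})" using Cons by simp
  moreover have "(if s = x then r b else [(s, b)]) \<in> L (S - {x})" using Cons.prems a by auto
  ultimately show ?case unfolding a sub_Cons by simp
qed

lemma retraction_from_sub:
  assumes cox: "coxeter_matrix S M" and xS: "x \<in> S"
    and rL: "\<And>b. r b \<in> L (S - {x})"
    and rc: "\<And>b. artin_rel M S (r b @ r (\<not> b)) []"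
    and rb: "\<And>t m. t \<in> S \<Longrightarrow> t \<noteq> x \<Longrightarrow> M x t = enat m \<Longrightarrow>
               artin_rel M S (sub x r (alt_word x t m)) (sub x r (alt_word t x m))"
    and rg: "r False = [] \<or> (\<exists>y\<in>S - {x}. r False = [(y, False)])"
  shows "ordinary_retraction M S (S - {x}) (\<lambda>A. {w. \<exists>u\<in>A. artin_rel M S (sub x r u) w})"
proof -
  define phi where "phi = (\<lambda>A. {w. \<exists>u\<in>A. artin_rel M S (sub x r u) w})"
  have XS: "L (S - {x}) \<subseteq> L S" by (intro lists_mono) blast
  have rL': "r b \<in> L S" for b using rL XS by blast
  have phi_cls: "phi (cls M S u) = cls M S (sub x r u)" if u: "u \<in> L S" for u
  proof
    show "phi (cls M S u) \<subseteq> cls M S (sub x r u)"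
    proof
      fix w assume "w \<in> phi (cls M S u)"
      then obtain u' where "artin_rel M S u u'" "artin_rel M S (sub x r u') w"
        unfolding phi_def cls_def by blast
      then have "artin_rel M S (sub x r u) w"
        using sub_rel[OF cox rL' rc rb] artin_rel.trans by blast
      then show "w \<in> cls M S (sub x r u)" unfolding cls_def by simp
    qed
  next
    show "cls M S (sub x r u) \<subseteq> phi (cls M S u)"
      using artin_rel.refl[OF u, of M] unfolding phi_def cls_def by blast
  qed
  have par: "artin_parabolic M S (S - {x}) = cls M S ` L (S - {x})"
    by (rule parabolic_eq) blast
  have hom: "phi \<in> hom (artin_group M S) ((artin_group M S)\<lparr>carrier := artin_parabolic M S (S - {x})\<rparr>)"
  proof (rule homI)
    fix A assume "A \<in> carrier (artin_group M S)"
    then obtain u where u: "u \<in> L S" "A = cls M S u" by (auto simp: carrier_eq)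
    have "sub x r u \<in> L (S - {x})" by (rule sub_lists2[OF u(1) rL])
    then show "phi A \<in> carrier ((artin_group M S)\<lparr>carrier := artin_parabolic M S (S - {x})\<rparr>)"
      using u phi_cls par by simp
  next
    fix A B assume "A \<in> carrier (artin_group M S)" "B \<in> carrier (artin_group M S)"
    then obtain u v where uv: "u \<in> L S" "A = cls M S u" "v \<in> L S" "B = cls M S v"
      by (auto simp: carrier_eq)
    have s: "sub x r u \<in> L S" "sub x r v \<in> L S" using sub_lists[OF _ rL'] uv by auto
    have uv': "u @ v \<in> L S" using uv by simp
    show "phi (A \<otimes>\<^bsub>artin_group M S\<^esub> B) =
        phi A \<otimes>\<^bsub>(artin_group M S)\<lparr>carrier := artin_parabolic M S (S - {x})\<rparr>\<^esub> phi B"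
      using uv s uv' by (simp add: mult_eq phi_cls del: in_listsD append_in_lists_conv)
  qed
  have fix_par: "\<forall>g\<in>artin_parabolic M S (S - {x}). phi g = g"
  proof
    fix g assume "g \<in> artin_parabolic M S (S - {x})"
    then obtain u where u: "u \<in> L (S - {x})" "g = cls M S u" using par by auto
    have "sub x r u = u" by (rule sub_id) (use u in auto)
    moreover have "u \<in> L S" using u(1) XS by blast
    ultimately show "phi g = g" using u(2) phi_cls by simp
  qed
  have fix_gen: "\<forall>y\<in>S - {x}. phi (artin_gen M S y) = artin_gen M S y"
  proof
    fix y assume y: "y \<in> S - {x}"
    then have "[(y, False)] \<in> L S" by simp
    then show "phi (artin_gen M S y) = artin_gen M S y" using y by (simp add: gen_eq phi_cls del: in_listsD)
  qed
  have mv: "\<forall>y\<in>S - (S - {x}). phi (artin_gen M S y) \<in> artin_gen M S ` (S - {x}) \<union> {\<one>\<^bsub>artin_group M S\<^esub>}"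
  proof
    fix y assume "y \<in> S - (S - {x})"
    then have y: "y = x" by blast
    have "[(x, False)] \<in> L S" using xS by simp
    then have e: "phi (artin_gen M S y) = cls M S (r False)" using y by (simp add: gen_eq phi_cls del: in_listsD)
    from rg show "phi (artin_gen M S y) \<in> artin_gen M S ` (S - {x}) \<union> {\<one>\<^bsub>artin_group M S\<^esub>}"
    proof
      assume "r False = []" then show ?thesis using e by (simp add: one_eq)
    next
      assume "\<exists>y\<in>S - {x}. r False = [(y, False)]"
      then obtain z where "z \<in> S - {x}" "r False = [(z, False)]" by blast
      then show ?thesis using e by (auto simp: gen_eq)
    qed
  qed
  show ?thesis unfolding ordinary_retraction_def phi_def[symmetric]
    using hom fix_par fix_gen mv by blast
qed




lemma triple:
  assumes rc: "retract_compatible T M"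
    and sym: "\<And>a b. a \<in> T \<Longrightarrow> b \<in> T \<Longrightarrow> M a b = M b a"
    and in_T: "x \<in> T" "y \<in> T" "t \<in> T" and d: "x \<noteq> y" "x \<noteq> t" "y \<noteq> t"
    and a: "M x y = enat a" and c: "M x t = enat c" and le: "a \<le> c"
  shows "\<exists>k. M y t = enat k \<and> k dvd c"
proof -
  obtain b where b: "M y t = enat b" using rc in_T unfolding retract_compatible_def by blast
  have oa: "odd a" using rc in_T a unfolding retract_compatible_def by force
  have yx: "M y x = enat a" using sym[of y x] in_T a by simp
  have tx: "M t x = enat c" using sym[of t x] in_T c by simp
  have ty: "M t y = enat b" using sym[of t y] in_T b by simp
  have "(let P = (\<lambda>a b c. M a b = M a c \<and>
                     (\<exists>n k. M a b = enat n \<and> M b c = enat k \<and> k dvd n))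
         in P x y t \<or> P y x t \<or> P t x y)"
    using rc in_T d unfolding retract_compatible_def by blast
  then have "(a = c \<and> b dvd a) \<or> (a = b \<and> c dvd a) \<or> (c = b \<and> a dvd c)"
    unfolding Let_def using a b c yx tx ty by auto
  then have "b dvd c"
  proof (elim disjE conjE)
    assume "a = b" "c dvd a"
    moreover have "a > 0" using oa by (cases a) auto
    ultimately have "c \<le> a" by (simp add: dvd_imp_le)
    then show "b dvd c" using le \<open>a = b\<close> by simp
  qed auto
  then show ?thesis using b by (intro exI[of _ b] conjI)
qed

theorem lemma3p10:
  fixes S :: "'a set" and M :: "'a \<Rightarrow> 'a \<Rightarrow> enat"
  assumes "coxeter_matrix S M"
    and "parabolic_retract_compatible S M"
    and "x \<in> S"
  shows "\<exists>\<phi>. ordinary_retraction M S (S - {x}) \<phi>"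
proof -
  note cox = assms(1) and xS = assms(3)
  have finS: "finite S" using cox unfolding coxeter_matrix_def by blast
  obtain P where H: "(\<Union>P = S) \<and> (\<forall>T\<in>P. T \<noteq> {}) \<and>
          (\<forall>T\<in>P. \<forall>T'\<in>P. T \<noteq> T' \<longrightarrow> T \<inter> T' = {}) \<and>
          (\<forall>T\<in>P. retract_compatible T M) \<and>
          (\<forall>T\<in>P. \<forall>T'\<in>P. T \<noteq> T' \<longrightarrow>
             (\<exists>n. (n = \<infinity> \<or> (\<exists>k. n = enat k \<and> even k)) \<and>
                  (\<forall>a\<in>T. \<forall>b\<in>T'. M a b = n)))"
    using assms(2) unfolding parabolic_retract_compatible_def by (rule exE)
  have PS: "\<Union>P = S" using H by (rule conjunct1)
  have Prc: "\<forall>T\<in>P. retract_compatible T M" using H by (elim conjE)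
  have Pn: "\<forall>T\<in>P. \<forall>T'\<in>P. T \<noteq> T' \<longrightarrow>
             (\<exists>n. (n = \<infinity> \<or> (\<exists>k. n = enat k \<and> even k)) \<and> (\<forall>a\<in>T. \<forall>b\<in>T'. M a b = n))"
    using H by (elim conjE)
  obtain T where T: "T \<in> P" "x \<in> T" using PS xS by blast
  have TS: "T \<subseteq> S" using PS T by blast
  have other: "\<exists>n. (n = \<infinity> \<or> (\<exists>k. n = enat k \<and> even k)) \<and> (\<forall>b\<in>T. M b t = n)"
    if t: "t \<in> S" "t \<notin> T" for t
  proof -
    obtain T' where T': "T' \<in> P" "t \<in> T'" using PS t by blast
    then have TT: "T \<noteq> T'" using t by blast
    obtain n where n: "n = \<infinity> \<or> (\<exists>k. n = enat k \<and> even k)" "\<forall>a\<in>T. \<forall>b\<in>T'. M a b = n"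
      using Pn[rule_format, OF T(1) T'(1) TT] by (elim exE conjE)
    have "\<forall>b\<in>T. M b t = n" using n(2) T'(2) by simp
    then show ?thesis using n(1) by (intro exI[of _ n] conjI)
  qed
  show ?thesis
  proof (cases "T = {x}")
    case True
    have rb: "artin_rel M S (sub x (\<lambda>b. []) (alt_word x t m)) (sub x (\<lambda>b. []) (alt_word t x m))"
      if t: "t \<in> S" "t \<noteq> x" "M x t = enat m" for t m
    proof -
      have "t \<notin> T" using True t by blast
      then obtain n where n: "n = \<infinity> \<or> (\<exists>k. n = enat k \<and> even k)" "\<forall>b\<in>T. M b t = n"
        using other t by blast
      have "M x t = n" using n(2) T(2) by simp
      then have "even m" using n t by auto
      then obtain j where j: "m = 2 * j" by blast
      have "sub x (\<lambda>b. []) (alt_word x t m) \<in> L S"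
        by (rule sub_lists) (auto simp: alt_word_lists xS t)
      then show ?thesis using sub_alt_even[OF t(2), of j] j by (simp add: artin_rel.refl)
    qed
    show ?thesis
      by (rule exI, rule retraction_from_sub[OF cox xS, of "\<lambda>b. []"])
        (auto simp: rb intro: artin_rel.refl)
  next
    case False
    have finT: "finite (T - {x})" using finS TS finite_subset by blast
    have neT: "T - {x} \<noteq> {}" using False T by blast
    define f where "f = (\<lambda>z. the_enat (M x z))"
    have Mf: "M x z = enat (f z)" if "z \<in> T" for z
      using Prc T that unfolding retract_compatible_def f_def by force
    obtain y where y: "y \<in> T - {x}" "f y = Min (f ` (T - {x}))"
    proof -
      have "Min (f ` (T - {x})) \<in> f ` (T - {x})" using Min_in[of "f ` (T - {x})"] finT neT by blast
      then show ?thesis using that by (metis (no_types, lifting) imageE)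
    qed
    have ymin: "f y \<le> f z" if "z \<in> T - {x}" for z using y finT that by simp
    have yS: "y \<in> S" using y TS by blast
    have sym: "M a b = M b a" if "a \<in> T" "b \<in> T" for a b
      using cox_sym[OF cox] that TS by blast
    have key: "\<exists>k. M y t = enat k \<and> k dvd m"
      if t: "t \<in> S" "t \<noteq> x" "t \<noteq> y" "M x t = enat m" for t m
    proof (cases "t \<in> T")
      case True
      have "f y \<le> f t" using ymin True t by blast
      moreover have "m = f t" using Mf[OF True] t by simp
      ultimately show ?thesis
        using triple[OF bspec[OF Prc T(1)] sym T(2) _ True, of y "f y" m] y t Mf[of y] by auto
    next
      case False
      then obtain n where n: "\<forall>b\<in>T. M b t = n" using other t by blast
      then have "M y t = M x t" using T y by auto
      then show ?thesis using t by auto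
    qed
    have rb: "artin_rel M S (sub x (\<lambda>b. [(y, b)]) (alt_word x t m)) (sub x (\<lambda>b. [(y, b)]) (alt_word t x m))"
      if t: "t \<in> S" "t \<noteq> x" "M x t = enat m" for t m
    proof (cases "t = y")
      case True
      then show ?thesis using t sub_alt_1[of t x y m] sub_alt_2[of t x y m]
        by (simp add: artin_rel.refl alt_word_lists yS)
    next
      case False
      then obtain k where k: "M y t = enat k" "k dvd m" using key t by blast
      then obtain j where j: "m = k * j" by blast
      show ?thesis using alt_dvd[OF yS t(1) False[symmetric] k(1) cox, of j]
        sub_alt_1[of t x y m] sub_alt_2[of t x y m] t j by simp
    qed
    have rc: "artin_rel M S ([(y, b)] @ [(y, \<not> b)]) []" for b
      using artin_rel.cancel[of "[]" S "[]" y M b] yS by simp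
    have yX: "y \<in> S - {x}" using y yS by blast
    have rL: "[(y, b)] \<in> L (S - {x})" for b using yX by simp
    have "ordinary_retraction M S (S - {x})
       (\<lambda>A. {w. \<exists>u\<in>A. artin_rel M S (sub x (\<lambda>b. [(y, b)]) u) w})"
      by (rule retraction_from_sub[where r = "\<lambda>b. [(y, b)]", OF cox xS rL rc rb]) (use yX in auto)
    then show ?thesis by blast
  qed
qed


end
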